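(* Let $R_0>0$, $\alpha\in\big(0,\frac{1}{p'\bar q}\big)$, $\vartheta\in(0,1/2)$, $\lambda_0:=\exp(\exp(\vartheta^{-1/\alpha}))$, and for $r\in(0,R_0]$ let $$\omega(r)=\frac1\vartheta\Big[\frac{1}{\log(\log(\lambda_0R_0/r))}\Big]^\alpha.$$ Define $R_{j+1}:=\exp\big(-\frac\vartheta\alpha[\vartheta\omega(R_j)]^{-1/\alpha}\big)R_j$ for $j\in\mathbb{N}_0$. Then $\omega(R_0)=1$, $$\omega(R_{j+1})\ge\omega(R_j)\Big(1-\vartheta\exp\big(-[\vartheta\omega(R_j)]^{-1/\alpha}\big)\Big)\quad\text{and}\quad\omega(R_j)\le2\omega(R_{j+1})\quad\text{for all }j\in\mathbb{N}_0.$$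
   Context: $p\ge2$, $p'=p/(p-1)$, $n\ge2$, $\bar q:=1+n/p$ if $p<n$ and $\bar q:=2$ if $p\ge n$. *)

theory Defs
  imports Complex_Main
begin

definition conj_exp :: "real \<Rightarrow> real" where
  "conj_exp p = p / (p - 1)"

definition qbar :: "real \<Rightarrow> nat \<Rightarrow> real" where
  "qbar p n = (if p < real n then 1 + real n / p else 2)"

definition lambda0 :: "real \<Rightarrow> real \<Rightarrow> real" where
  "lambda0 \<theta> \<alpha> = exp (exp (\<theta> powr (-1 / \<alpha>)))"

definition omega :: "real \<Rightarrow> real \<Rightarrow> real \<Rightarrow> real \<Rightarrow> real" where
  "omega \<theta> \<alpha> R0 r = (1 / \<theta>) * (1 / ln (ln (lambda0 \<theta> \<alpha> * R0 / r))) powr \<alpha>"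

primrec radii :: "real \<Rightarrow> real \<Rightarrow> real \<Rightarrow> nat \<Rightarrow> real" where
  "radii \<theta> \<alpha> R0 0 = R0"
| "radii \<theta> \<alpha> R0 (Suc j) =
     exp (- (\<theta> / \<alpha>) * (\<theta> * omega \<theta> \<alpha> R0 (radii \<theta> \<alpha> R0 j)) powr (-1 / \<alpha>))
       * radii \<theta> \<alpha> R0 j"

end

theory Submission
  imports Defs
begin

lemma step_lemma:
  fixes \<alpha> \<theta> r K :: real
  assumes a: "0 < \<alpha>" and th: "0 < \<theta>" "\<theta> < 1/2" and r: "r > 0" and K: "K > 0"
    and y0: "ln (K / r) > 1"
  defines "W \<equiv> \<lambda>s. (1 / \<theta>) * (1 / ln (ln (K / s))) powr \<alpha>"
  defines "r' \<equiv> exp (- (\<theta> / \<alpha>) * (\<theta> * W r) powr (-1 / \<alpha>)) * r"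
  shows "r' > 0 \<and> ln (K / r') \<ge> ln (K / r) \<and>
    W r' \<ge> W r * (1 - \<theta> * exp (- ((\<theta> * W r) powr (-1 / \<alpha>))))
    \<and> W r \<le> 2 * W r'"
proof -
  define y where "y = ln (K / r)"
  define x where "x = ln y"
  have y1: "y > 1" using y0 by (simp add: y_def)
  have x: "x > 0" using y1 by (simp add: x_def)
  have ypos: "y > 0" using y1 by simp
  have yx: "y = exp x" using ypos x_def by simp
  have Wr: "W r = (1/\<theta>) * (1/x) powr \<alpha>" by (simp add: W_def x_def y_def)
  have tW: "(\<theta> * W r) powr (-1 / \<alpha>) = x"
  proof -
    have "\<theta> * W r = (1/x) powr \<alpha>" using th by (simp add: Wr)
    then have "(\<theta> * W r) powr (-1 / \<alpha>) = (1/x) powr (\<alpha> * (-1/\<alpha>))"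
      by (simp add: powr_powr)
    also have "\<dots> = x" using a x by (simp add: powr_minus_divide)
    finally show ?thesis .
  qed
  define c where "c = \<theta> / \<alpha>"
  have c: "c > 0" using a th by (simp add: c_def)
  have r'e: "r' = exp (- c * x) * r" unfolding r'_def tW c_def by simp
  have r'pos: "r' > 0" using r'e r by simp
  have Kr: "K / r > 0" using K r by simp
  have "K / r' = exp (c * x) * (K / r)" unfolding r'e using r
    by (simp add: exp_minus field_simps)
  moreover have "ln (exp (c * x) * (K / r)) = c * x + y" using Kr
    by (subst ln_mult) (auto simp: y_def)
  ultimately have lnK: "ln (K / r') = c * x + y" by simp
  define x' where "x' = ln (y + c * x)"
  have lnlnK: "ln (ln (K / r')) = x'" by (simp add: lnK x'_def add.commute)
  have "0 \<le> c * x" using c x by simp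
  then have xle: "x \<le> x'" unfolding x'_def x_def using ypos
    by (intro ln_mono) auto
  have x'pos: "x' > 0" using xle x by simp
  have "y * (1 + c * x / y) = y + c * x" using ypos by (simp add: field_simps)
  then have "x' = ln (y * (1 + c * x / y))" by (simp add: x'_def)
  also have "\<dots> = x + ln (1 + c * x / y)"
  proof -
    have "0 < 1 + c * x / y" using ypos c x by (simp add: add_pos_pos)
    then show ?thesis using ypos by (subst ln_mult) (auto simp: x_def)
  qed
  also have "\<dots> \<le> x + c * x / y" using ypos c x
    by (simp add: ln_add_one_self_le_self)
  finally have x'le: "x' \<le> x + c * x / y" .
  define t where "t = \<theta> / y"
  have "\<theta> < \<theta> * y" using th y1 by simp
  then have t: "0 < t" "t < 1/2" using th ypos
    by (auto simp: t_def divide_less_eq)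
  have et: "\<theta> * exp (- x) = t" using yx by (simp add: t_def exp_minus field_simps)
  define q where "q = x' / x"
  have q1: "q \<ge> 1" using xle x by (simp add: q_def)
  have qle: "q - 1 \<le> t / \<alpha>"
  proof -
    have "q - 1 = (x' - x) / x" using x by (simp add: q_def field_simps)
    also have "\<dots> \<le> (c * x / y) / x" using x x'le by (intro divide_right_mono) auto
    also have "\<dots> = t / \<alpha>" using x by (simp add: t_def c_def)
    finally show ?thesis .
  qed
  have lnq: "ln q \<le> t / \<alpha>" using q1 qle ln_le_minus_one[of q] by linarith
  have "q powr (-\<alpha>) = exp (-\<alpha> * ln q)" using q1 by (simp add: powr_def)
  also have "\<dots> \<ge> exp (- t)"
  proof -
    have "\<alpha> * ln q \<le> \<alpha> * (t / \<alpha>)" using lnq a by (intro mult_left_mono) auto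
    then have "-\<alpha> * ln q \<ge> - t" using a by simp
    then show ?thesis by simp
  qed
  finally have qe: "q powr (-\<alpha>) \<ge> exp (- t)" .
  have qt: "q powr (-\<alpha>) \<ge> 1 - t" using qe exp_ge_add_one_self[of "-t"] by linarith
  have x'q: "x' = x * q" using x by (simp add: q_def)
  have Wr': "W r' = (1/\<theta>) * x' powr (-\<alpha>)"
    using x'pos by (simp add: W_def lnlnK powr_minus_divide powr_divide)
  have Wr2: "W r = (1/\<theta>) * x powr (-\<alpha>)"
    using x by (simp add: Wr powr_minus_divide powr_divide)
  have Wr'2: "W r' = W r * q powr (-\<alpha>)"
    using x q1 by (simp add: Wr' Wr2 x'q powr_mult)
  have Wnn: "W r \<ge> 0" using Wr2 th by simp
  have i1: "W r' \<ge> W r * (1 - \<theta> * exp (- ((\<theta> * W r) powr (-1 / \<alpha>))))"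
    unfolding tW et Wr'2 using Wnn qt by (simp add: mult_left_mono)
  have "W r * (1/2) \<le> W r * q powr (-\<alpha>)" using Wnn qt t by (intro mult_left_mono) auto
  then have i2: "W r \<le> 2 * W r'" using Wr'2 by simp
  have "ln (K / r') \<ge> ln (K / r)" using lnK c x by (simp add: y_def)
  then show ?thesis using r'pos i1 i2 by simp
qed

theorem claim4p2:
  fixes p R0 \<alpha> \<theta> :: real and n :: nat
  assumes "p \<ge> 2" and "n \<ge> 2"
    and "R0 > 0"
    and "0 < \<alpha>" and "\<alpha> < 1 / (conj_exp p * qbar p n)"
    and "0 < \<theta>" and "\<theta> < 1/2"
  shows "omega \<theta> \<alpha> R0 R0 = 1 \<and>
    (\<forall>j. omega \<theta> \<alpha> R0 (radii \<theta> \<alpha> R0 (Suc j)) \<ge>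
          omega \<theta> \<alpha> R0 (radii \<theta> \<alpha> R0 j) *
          (1 - \<theta> * exp (- ((\<theta> * omega \<theta> \<alpha> R0 (radii \<theta> \<alpha> R0 j)) powr (-1 / \<alpha>))))
        \<and> omega \<theta> \<alpha> R0 (radii \<theta> \<alpha> R0 j) \<le> 2 * omega \<theta> \<alpha> R0 (radii \<theta> \<alpha> R0 (Suc j)))"
proof -
  define K where "K = lambda0 \<theta> \<alpha> * R0"
  have Kpos: "K > 0" using assms(3) by (simp add: K_def lambda0_def)
  have om: "\<And>s. omega \<theta> \<alpha> R0 s = (1 / \<theta>) * (1 / ln (ln (K / s))) powr \<alpha>"
    by (simp add: omega_def K_def)
  have base0: "ln (K / R0) = exp (\<theta> powr (-1 / \<alpha>))"
    using assms(3) by (simp add: K_def lambda0_def)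
  have base: "ln (ln (K / R0)) = \<theta> powr (-1 / \<alpha>)"
    using base0 by simp
  have bpos: "\<theta> powr (-1 / \<alpha>) > 0" using assms(6) by simp
  have inv: "radii \<theta> \<alpha> R0 j > 0 \<and> ln (K / radii \<theta> \<alpha> R0 j) > 1" for j
  proof (induction j)
    case 0 then show ?case using assms(3) base0 bpos by simp
  next
    case (Suc j)
    have "radii \<theta> \<alpha> R0 (Suc j) > 0 \<and> ln (K / radii \<theta> \<alpha> R0 (Suc j)) \<ge> ln (K / radii \<theta> \<alpha> R0 j)"
      using step_lemma[OF assms(4,6,7) _ Kpos, of "radii \<theta> \<alpha> R0 j", unfolded om[symmetric], folded radii.simps(2)] Suc
      by simp
    then show ?case using Suc by linarith
  qed
  have "omega \<theta> \<alpha> R0 R0 = (1/\<theta>) * (1 / \<theta> powr (-1 / \<alpha>)) powr \<alpha>"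
    by (simp add: om base)
  also have "\<dots> = 1" using assms(4,6)
    by (simp add: powr_divide powr_powr powr_minus_divide)
  finally have w0: "omega \<theta> \<alpha> R0 R0 = 1" .
  show ?thesis
  proof (intro conjI allI w0)
    fix j
    have "(\<lambda>x. x) (omega \<theta> \<alpha> R0 (radii \<theta> \<alpha> R0 (Suc j)) \<ge>
          omega \<theta> \<alpha> R0 (radii \<theta> \<alpha> R0 j) *
          (1 - \<theta> * exp (- ((\<theta> * omega \<theta> \<alpha> R0 (radii \<theta> \<alpha> R0 j)) powr (-1 / \<alpha>))))
        \<and> omega \<theta> \<alpha> R0 (radii \<theta> \<alpha> R0 j) \<le> 2 * omega \<theta> \<alpha> R0 (radii \<theta> \<alpha> R0 (Suc j)))"
      using step_lemma[OF assms(4,6,7) _ Kpos, of "radii \<theta> \<alpha> R0 j", unfolded om[symmetric], folded radii.simps(2)] inv[of j]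
      by simp
    then show "omega \<theta> \<alpha> R0 (radii \<theta> \<alpha> R0 (Suc j)) \<ge>
          omega \<theta> \<alpha> R0 (radii \<theta> \<alpha> R0 j) *
          (1 - \<theta> * exp (- ((\<theta> * omega \<theta> \<alpha> R0 (radii \<theta> \<alpha> R0 j)) powr (-1 / \<alpha>))))"
      "omega \<theta> \<alpha> R0 (radii \<theta> \<alpha> R0 j) \<le> 2 * omega \<theta> \<alpha> R0 (radii \<theta> \<alpha> R0 (Suc j))"
      by auto
  qed
qed

end
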